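(* Let $\mathbb{F}\in\{\mathbb{R},\mathbb{C}\}$, let $A\in\mathcal{M}_n(\mathbb{F})$ be Hermitian, and let $\mathbf{v}=(v_1,\dots,v_n)^\top\in\mathbb{F}^n$ be an eigenvector of $A$ whose first entry $v_1$ is real and nonzero. Define $\mathbf{q}_1\coloneqq\mathbf{v}$ and $\mathbf{q}_i\coloneqq \overline{v}_i\,\mathbf{e}_1 - v_1\,\mathbf{e}_i$ for $i=2,\dots,n$, where $\mathbf{e}_1,\dots,\mathbf{e}_n$ is the canonical basis of $\mathbb{F}^n$. Then the matrix $Q=(\mathbf{q}_1\ \mathbf{q}_2\ \cdots\ \mathbf{q}_n)\in\mathcal{M}_n(\mathbb{F})$ whose $i$-th column is $\mathbf{q}_i$ is Hermitian and invertible.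
   Context: $\overline{v}_i$ denotes the complex conjugate of $v_i$. *)

theory Defs
  imports "Jordan_Normal_Form.Char_Poly" "Jordan_Normal_Form.Conjugate"
begin

definition hermitian_mat :: "nat \<Rightarrow> 'a :: conjugatable_field mat \<Rightarrow> bool" where
  "hermitian_mat n A \<longleftrightarrow> A \<in> carrier_mat n n \<and>
     (\<forall>i<n. \<forall>j<n. A $$ (i, j) = conjugate (A $$ (j, i)))"

text \<open>The matrix Q whose columns are q_1 = v and q_i = conj(v_i) e_1 - v_1 e_i (i = 2..n),
  with 0-based indexing (index 0 corresponds to 1).\<close>
definition Q_mat :: "nat \<Rightarrow> 'a :: conjugatable_field vec \<Rightarrow> 'a mat" where
  "Q_mat n v = mat n n (\<lambda>(i, j).
     if j = 0 then v $ i
     else (if i = 0 then conjugate (v $ j) else 0) - (if i = j then v $ 0 else 0))"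

end

theory Submission imports Defs begin

lemma conj_diff: "conjugate ((a::'a::conjugatable_ring) - b) = conjugate a - conjugate b"
  by (simp only: diff_conv_add_uminus conjugate_dist_add conjugate_neg)
lemma Q_herm:
  fixes v :: "'a::conjugatable_field vec"
  assumes c: "conjugate (v$0) = v$0"
  shows "hermitian_mat n (Q_mat n v)"
  unfolding hermitian_mat_def
proof (intro conjI allI impI)
  show "Q_mat n v \<in> carrier_mat n n" by (simp add: Q_mat_def)
  fix i j assume ij: "i < n" "j < n"
  show "Q_mat n v $$ (i, j) = conjugate (Q_mat n v $$ (j, i))"
  proof (cases "i = 0")
    case True
    then show ?thesis using ij c by (cases "j = 0") (simp_all add: Q_mat_def conj_diff)
  next
    case False
    then show ?thesis using ij c by (cases "j = 0") (auto simp add: Q_mat_def conj_diff conjugate_neg)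
  qed
qed

lemma Q_ker:
  fixes v :: "'a::{conjugatable_ordered_field, ordered_ab_group_add} vec"
  assumes v0: "v$0 \<noteq> 0" "conjugate (v$0) = v$0"
    and x: "x \<in> carrier_vec n" and Qx: "Q_mat n v *\<^sub>v x = 0\<^sub>v n"
  shows "x = 0\<^sub>v n"
proof (cases "n = 0")
  case True then show ?thesis using x by auto
next
  case False
  hence n: "0 < n" by auto
  have split: "{0..<n} = insert 0 {1..<n}" using n by auto
  have rowi: "v$i * x$0 - v$0 * x$i = 0" if i: "1 \<le> i" "i < n" for i
  proof -
    have "(Q_mat n v *\<^sub>v x) $ i = 0" using Qx i by simp
    also have "(Q_mat n v *\<^sub>v x) $ i = (\<Sum>j\<in>{0..<n}. Q_mat n v $$ (i,j) * x$j)"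
      using i x by (simp add: Q_mat_def scalar_prod_def)
    also have "\<dots> = v$i * x$0 + (\<Sum>j\<in>{1..<n}. (if i = j then - v$0 else 0) * x$j)"
      unfolding split using i apply (simp add: Q_mat_def)
      by (rule sum.cong) auto
    also have "(\<Sum>j\<in>{1..<n}. (if i = j then - v$0 else 0) * x$j) = - v$0 * x$i"
    proof -
      have "(\<Sum>j\<in>{1..<n}. (if i = j then - v$0 else 0) * x$j) = (\<Sum>j\<in>{1..<n}. if i = j then - v$0 * x$j else 0)"
        by (rule sum.cong) auto
      also have "\<dots> = - v$0 * x$i" using i by (simp add: sum.delta)
      finally show ?thesis .
    qed
    finally show ?thesis by simp
  qed
  hence xi: "x$i = v$i * x$0 / v$0" if "1 \<le> i" "i < n" for i
    using that v0(1) by (simp add: field_simps)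
  have "(Q_mat n v *\<^sub>v x) $ 0 = 0" using Qx n by simp
  also have "(Q_mat n v *\<^sub>v x) $ 0 = (\<Sum>j\<in>{0..<n}. Q_mat n v $$ (0,j) * x$j)"
    using n x by (simp add: Q_mat_def scalar_prod_def)
  also have "\<dots> = v$0 * x$0 + (\<Sum>j\<in>{1..<n}. conjugate (v$j) * x$j)"
    unfolding split using n by (simp add: Q_mat_def)
  also have "(\<Sum>j\<in>{1..<n}. conjugate (v$j) * x$j) = (\<Sum>j\<in>{1..<n}. x$0 / v$0 * (v$j * conjugate (v$j)))"
    by (rule sum.cong) (auto simp: xi)
  also have "\<dots> = x$0 / v$0 * (\<Sum>j\<in>{1..<n}. v$j * conjugate (v$j))"
    by (simp add: sum_distrib_left)
  finally have eq: "x$0 / v$0 * (v$0 * conjugate (v$0) + (\<Sum>j\<in>{1..<n}. v$j * conjugate (v$j))) = 0"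
    using v0 by (simp add: field_simps)
  have "(\<Sum>j\<in>{1..<n}. v$j * conjugate (v$j)) \<ge> 0"
    by (rule sum_nonneg) (rule conjugate_square_positive)
  moreover have "v$0 * conjugate (v$0) > 0" using v0(1) by simp
  ultimately have "v$0 * conjugate (v$0) + (\<Sum>j\<in>{1..<n}. v$j * conjugate (v$j)) > 0"
    by (rule add_pos_nonneg[rotated])
  with eq v0(1) have x0: "x$0 = 0" by auto
  show ?thesis
  proof (rule eq_vecI)
    fix i assume "i < dim_vec (0\<^sub>v n)"
    then show "x $ i = 0\<^sub>v n $ i" using x0 xi[of i] by (cases "i = 0") auto
  qed (use x in auto)
qed

lemma Q_inv:
  fixes v :: "'a::{conjugatable_ordered_field, ordered_ab_group_add} vec"
  assumes v0: "v$0 \<noteq> 0" "conjugate (v$0) = v$0"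
  shows "invertible_mat (Q_mat n v)"
proof -
  have Q: "Q_mat n v \<in> carrier_mat n n" by (simp add: Q_mat_def)
  have "det (Q_mat n v) \<noteq> 0"
  proof
    assume "det (Q_mat n v) = 0"
    then obtain x where "x \<in> carrier_vec n" "x \<noteq> 0\<^sub>v n" "Q_mat n v *\<^sub>v x = 0\<^sub>v n"
      unfolding det_0_iff_vec_prod_zero_field[OF Q] by blast
    with Q_ker[OF v0] show False by blast
  qed
  from det_non_zero_imp_unit[OF Q this, of "()"] obtain B where
    B: "B \<in> carrier_mat n n" "B * Q_mat n v = 1\<^sub>m n" "Q_mat n v * B = 1\<^sub>m n"
    unfolding Units_def ring_mat_def by auto
  show ?thesis unfolding invertible_mat_def inverts_mat_def square_mat.simps
    using B Q by auto
qed

theorem lemma4p1: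
  shows "(\<forall>n (A :: real mat) v. hermitian_mat n A \<longrightarrow> v \<in> carrier_vec n \<longrightarrow>
            (\<exists>lam. eigenvector A v lam) \<longrightarrow> v $ 0 \<noteq> 0 \<longrightarrow>
            hermitian_mat n (Q_mat n v) \<and> invertible_mat (Q_mat n v))
       \<and> (\<forall>n (A :: complex mat) v. hermitian_mat n A \<longrightarrow> v \<in> carrier_vec n \<longrightarrow>
            (\<exists>lam. eigenvector A v lam) \<longrightarrow> v $ 0 \<in> \<real> \<longrightarrow> v $ 0 \<noteq> 0 \<longrightarrow>
            hermitian_mat n (Q_mat n v) \<and> invertible_mat (Q_mat n v))"
proof (intro conjI allI impI)
  fix n and v :: "real vec"
  assume "v $ 0 \<noteq> 0"
  moreover have "conjugate (v$0) = v$0" by simp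
  ultimately show "hermitian_mat n (Q_mat n v)" "invertible_mat (Q_mat n v)"
    using Q_herm Q_inv by blast+
next
  fix n and v :: "complex vec"
  assume r: "v $ 0 \<in> \<real>" and "v $ 0 \<noteq> 0"
  moreover have "conjugate (v$0) = v$0" using r by (simp add: Reals_cnj_iff)
  ultimately show "hermitian_mat n (Q_mat n v)" "invertible_mat (Q_mat n v)"
    using Q_herm Q_inv by blast+
qed

end
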